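(* Let $X=[-1,1]\times[0,e^{-2\pi}]$, $X_1=\{(x,y)\in X:y=0,\ x>0\}\cup\{(x,y)\in X:y>0,\ x>y\sin(-\log y)\}$, $X_2=\{(x,y)\in X:y=0,\ x<0\}\cup\{(x,y)\in X:y>0,\ x<y\sin(-\log y)\}$, $f_1(x,y)=e^{-\pi}(x,y)$ and $f_2(x,y)=\left(-\tfrac12+\tfrac12(x+\tfrac12),\ \tfrac12 y\right)$. Let $f:X\to X$ be any map with $f|_{X_1}=f_1$ and $f|_{X_2}=f_2$. Then for every $n\ge2$ there is an atom of generation $n$ of $f$ which is disconnected and has infinitely many connected components.
   Context: For $A\subset X$ let $F_i(A):=\overline{f(A\cap X_i)}$ ($i=1,2$). An atom of generation $n\ge1$ is a set of the form $F_{i_n}\circ\cdots\circ F_{i_1}(X)$ with $i_1,\dots,i_n\in\{1,2\}$. *)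

theory Defs
  imports "HOL-Analysis.Analysis"
begin

definition XX :: "(real \<times> real) set" where
  "XX = {-1..1} \<times> {0..exp (-2*pi)}"

definition X1 :: "(real \<times> real) set" where
  "X1 = {(x, y) \<in> XX. y = 0 \<and> x > 0} \<union> {(x, y) \<in> XX. y > 0 \<and> x > y * sin (- ln y)}"

definition X2 :: "(real \<times> real) set" where
  "X2 = {(x, y) \<in> XX. y = 0 \<and> x < 0} \<union> {(x, y) \<in> XX. y > 0 \<and> x < y * sin (- ln y)}"

definition f1 :: "real \<times> real \<Rightarrow> real \<times> real" where
  "f1 = (\<lambda>(x, y). (exp (-pi) * x, exp (-pi) * y))"

definition f2 :: "real \<times> real \<Rightarrow> real \<times> real" where
  "f2 = (\<lambda>(x, y). (-1/2 + 1/2 * (x + 1/2), 1/2 * y))"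

definition Xi :: "nat \<Rightarrow> (real \<times> real) set" where
  "Xi i = (if i = 1 then X1 else X2)"

definition Fi :: "(real \<times> real \<Rightarrow> real \<times> real) \<Rightarrow> nat \<Rightarrow> (real \<times> real) set \<Rightarrow> (real \<times> real) set" where
  "Fi f i A = closure (f ` (A \<inter> Xi i))"

text \<open>The atom F_{i_n} \<circ> ... \<circ> F_{i_1}(X) for the index list [i_1, ..., i_n].\<close>
definition atom :: "(real \<times> real \<Rightarrow> real \<times> real) \<Rightarrow> nat list \<Rightarrow> (real \<times> real) set" where
  "atom f is = fold (\<lambda>i A. Fi f i A) is XX"

end

theory Submission
  imports Defs
begin

lemma sin_add_2pi_nat: "sin (x + 2*pi*real k) = sin x"
proof (induction k)
  case 0 then show ?case by simp
next
  case (Suc k)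
  have "sin (x + 2*pi*real (Suc k)) = sin ((x + 2*pi*real k) + 2*pi)"
    by (rule arg_cong[where f=sin]) (simp add: algebra_simps)
  also have "\<dots> = sin (x + 2*pi*real k)" by (rule sin_periodic)
  finally show ?case using Suc by simp
qed

lemma exp_lt_iff_ln: "0 < (y::real) \<Longrightarrow> exp a < y \<longleftrightarrow> a < ln y"
  using ln_less_cancel_iff[of "exp a" y] by simp

lemma lt_exp_iff_ln: "0 < (y::real) \<Longrightarrow> y < exp a \<longleftrightarrow> ln y < a"
  using ln_less_cancel_iff[of y "exp a"] by simp

lemma sin_pos_band:
  assumes "exp(-(2*real j+1)*pi) < y" "y < exp(-2*real j*pi)"
  shows "sin(-ln y) > 0"
proof -
  have y: "y > 0" using assms(1) exp_gt_zero[of "-(2*real j+1)*pi"] exp_gt_zero[of "-(2*real j+2)*pi"] by linarith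
  have a: "-(2*real j+1)*pi < ln y" using assms(1) exp_lt_iff_ln[OF y] by blast
  have b: "ln y < -2*real j*pi" using assms(2) lt_exp_iff_ln[OF y] by blast
  define t where "t = -ln y - 2*pi*real j"
  have e1: "-(2*real j+1)*pi = -(2*pi*real j) - pi" "-2*real j*pi = -(2*pi*real j)"
    by (simp_all add: algebra_simps)
  have "0 < t" "t < pi" using a b unfolding t_def e1 by linarith+
  then have "sin t > 0" by (rule sin_gt_zero)
  moreover have "-ln y = t + 2*pi*real j" by (simp add: t_def)
  ultimately show ?thesis using sin_add_2pi_nat by simp
qed

lemma sin_neg_band:
  assumes "exp(-(2*real j+2)*pi) < y" "y < exp(-(2*real j+1)*pi)"
  shows "sin(-ln y) < 0"
proof -
  have y: "y > 0" using assms(1) exp_gt_zero[of "-(2*real j+1)*pi"] exp_gt_zero[of "-(2*real j+2)*pi"] by linarith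
  have a: "-(2*real j+2)*pi < ln y" using assms(1) exp_lt_iff_ln[OF y] by blast
  have b: "ln y < -(2*real j+1)*pi" using assms(2) lt_exp_iff_ln[OF y] by blast
  define t where "t = -ln y - 2*pi*real j"
  have e1: "-(2*real j+2)*pi = -(2*pi*real j) - 2*pi" "-(2*real j+1)*pi = -(2*pi*real j) - pi"
    by (simp_all add: algebra_simps)
  have "pi < t" "t < 2*pi" using a b unfolding t_def e1 by linarith+
  then have "sin t < 0" by (rule sin_lt_zero)
  moreover have "-ln y = t + 2*pi*real j" by (simp add: t_def)
  ultimately show ?thesis using sin_add_2pi_nat by simp
qed

lemma XX_iff: "(x,y) \<in> XX \<longleftrightarrow> -1 \<le> x \<and> x \<le> 1 \<and> 0 \<le> y \<and> y \<le> exp(-2*pi)"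
  by (simp add: XX_def)
lemma X1_iff: "(x,y) \<in> X1 \<longleftrightarrow> (x,y) \<in> XX \<and> ((y = 0 \<and> x > 0) \<or> (y > 0 \<and> x > y * sin(-ln y)))"
  unfolding X1_def by blast
lemma X2_iff: "(x,y) \<in> X2 \<longleftrightarrow> (x,y) \<in> XX \<and> ((y = 0 \<and> x < 0) \<or> (y > 0 \<and> x < y * sin(-ln y)))"
  unfolding X2_def by blast

lemma sin_level_half: "sin(-ln(exp(-(2*real k + 1/2)*pi))) = 1"
proof -
  have "-ln(exp(-(2*real k + 1/2)*pi)) = pi/2 + 2*pi*real k"
    by (simp only: ln_exp) (simp add: algebra_simps)
  then show ?thesis by (simp only: sin_add_2pi_nat) simp
qed
lemma sin_level_3half: "sin(-ln(exp(-(2*real k + 3/2)*pi))) = -1"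
proof -
  have "-ln(exp(-(2*real k + 3/2)*pi)) = (pi/2 + pi) + 2*pi*real k"
    by (simp only: ln_exp) (simp add: algebra_simps)
  then have "sin(-ln(exp(-(2*real k + 3/2)*pi))) = sin (pi/2 + pi)" by (simp only: sin_add_2pi_nat)
  also have "\<dots> = -1" by (simp only: sin_periodic_pi) simp
  finally show ?thesis .
qed
lemma exp_level_le: "(a::real) \<ge> 2 \<Longrightarrow> exp(-a*pi) \<le> exp(-2*pi)"
proof -
  assume "a \<ge> 2"
  then have "2*pi \<le> a*pi" using pi_gt_zero by (intro mult_right_mono) auto
  then show ?thesis by simp
qed
lemma exp_level_mono: "(a::real) \<le> b \<Longrightarrow> exp(-b*pi) \<le> exp(-a*pi)"
proof -
  assume "a \<le> b"
  then have "a*pi \<le> b*pi" using pi_gt_zero by (intro mult_right_mono) auto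
  then show ?thesis by simp
qed
lemma exp_level_strict: "(a::real) < b \<Longrightarrow> exp(-b*pi) < exp(-a*pi)"
proof -
  assume "a < b"
  then have "a*pi < b*pi" using pi_gt_zero by (intro mult_strict_right_mono) auto
  then show ?thesis by simp
qed

lemma fold_replicate_funpow: "fold g (replicate m x) s = (g x ^^ m) s"
  by (induction m arbitrary: s) (auto simp: funpow_swap1)

lemma exp_2pi_small: "exp (-2*pi) < 1/4"
proof -
  have "1 + 2*pi \<le> exp (2*pi)" by (rule exp_ge_add_one_self)
  moreover have "pi > 3" by (rule pi_gt3)
  ultimately have "exp (2*pi) > 4" by linarith
  then show ?thesis by (simp add: exp_minus field_simps)
qed


theorem proposition7:
  fixes f :: "real \<times> real \<Rightarrow> real \<times> real"
  assumes "f ` XX \<subseteq> XX"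
    and "\<forall>p\<in>X1. f p = f1 p"
    and "\<forall>p\<in>X2. f p = f2 p"
    and "n \<ge> 2"
  shows "\<exists>is. length is = n \<and> set is \<subseteq> {1, 2} \<and>
           \<not> connected (atom f is) \<and> infinite (components (atom f is))"
proof -
  have fX1: "\<And>p. p \<in> X1 \<Longrightarrow> f p = f1 p" using assms(2) by blast
  have fX2: "\<And>p. p \<in> X2 \<Longrightarrow> f p = f2 p" using assms(3) by blast
  have X1XX: "X1 \<subseteq> XX" and X2XX: "X2 \<subseteq> XX" unfolding X1_def X2_def by auto
  have Fi2: "Fi f 2 S = closure (f2 ` (S \<inter> X2))" for S
  proof -
    have "f ` (S \<inter> X2) = f2 ` (S \<inter> X2)" by (rule image_cong) (auto simp: fX2)
    then show ?thesis by (simp add: Fi_def Xi_def)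
  qed
  define B where "B = Fi f 1 XX"
  have B_eq: "B = closure (f1 ` X1)"
  proof -
    have "XX \<inter> X1 = X1" using X1XX by blast
    moreover have "f ` X1 = f1 ` X1" by (rule image_cong) (auto simp: fX1)
    ultimately show ?thesis by (simp add: B_def Fi_def Xi_def)
  qed
  define C where "C = B \<inter> X2"
  define D where "D = closure C"
  define A where "A = (\<lambda>m. (Fi f 2 ^^ m) B)"
  have A_Suc: "A (Suc m) = closure (f2 ` (A m \<inter> X2))" for m
    by (simp add: A_def Fi2)
  define h :: "nat \<Rightarrow> real \<times> real \<Rightarrow> real \<times> real"
    where "h = (\<lambda>m p. (-1/2 + (fst p + 1/2)/2^m, snd p / 2^m))"
  have h0: "h 0 p = p" for p by (simp add: h_def)
  have hS: "h (Suc m) p = f2 (h m p)" for m p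
    by (cases p) (simp add: h_def f2_def field_simps)
  have snd_h: "snd (h m p) = snd p / 2^m" for m p by (simp add: h_def)
  have hcont: "continuous_on UNIV (h m)" for m
    unfolding h_def by (intro continuous_intros) auto
  have XXc: "compact XX" unfolding XX_def by (intro compact_Times compact_Icc)
  have DXX: "D \<subseteq> XX" unfolding D_def C_def
    using X2XX by (intro closure_minimal compact_imp_closed[OF XXc]) auto
  have Dc: "compact D"
    unfolding compact_eq_bounded_closed D_def
    using bounded_subset[OF compact_imp_bounded[OF XXc] DXX] by (simp add: D_def)
  have clos_img: "closure S \<subseteq> h m ` D" if "S \<subseteq> h m ` D" for S m
    by (rule closure_minimal[OF that compact_imp_closed[OF compact_continuous_image[OF continuous_on_subset[OF hcont] Dc]]]) simp
  have gap: False if q: "q \<in> D" and qa: "exp(-(2*real j+2)*pi) < snd q"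
      and qb: "snd q < exp(-(2*real j+1)*pi)" for q j
  proof -
    define a where "a = exp(-(2*real j+2)*pi)"
    define b where "b = exp(-(2*real j+1)*pi)"
    define U where "U = {q::real\<times>real. a < snd q \<and> snd q < b}"
    define W where "W = {q::real\<times>real. fst q < 0 \<and> a < snd q \<and> snd q < b}"
    have oU: "open U" unfolding U_def by (intro open_Collect_conj open_Collect_less continuous_intros)
    have oW: "open W" unfolding W_def by (intro open_Collect_conj open_Collect_less continuous_intros)
    have a_eq: "a = exp(-pi) * exp(-(2*real j+1)*pi)"
      unfolding a_def by (subst exp_add[symmetric]) (simp add: algebra_simps)
    have b_eq: "b = exp(-pi) * exp(-2*real j*pi)"
      unfolding b_def by (subst exp_add[symmetric]) (simp add: algebra_simps)
    have apos: "a > 0" unfolding a_def by simp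
    have WX: "W \<inter> f1 ` X1 = {}"
    proof (rule ccontr)
      assume "W \<inter> f1 ` X1 \<noteq> {}"
      then obtain x y where p: "(x,y) \<in> X1" and w: "f1 (x,y) \<in> W" by auto
      have w1: "exp(-pi) * x < 0" and w2: "a < exp(-pi) * y" and w3: "exp(-pi) * y < b"
        using w by (auto simp: W_def f1_def)
      have y1: "exp(-(2*real j+1)*pi) < y" using w2 unfolding a_eq
        by (simp add: mult_less_cancel_left_pos)
      have y2: "y < exp(-2*real j*pi)" using w3 unfolding b_eq
        by (simp add: mult_less_cancel_left_pos)
      have ypos: "y > 0" using y1 by (smt (verit) exp_gt_zero)
      have "sin(-ln y) > 0" by (rule sin_pos_band[OF y1 y2])
      with ypos have "y * sin(-ln y) > 0" using mult_pos_pos by blast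
      moreover have "x > y * sin (- ln y)" using p ypos unfolding X1_iff by (metis less_irrefl)
      ultimately have "x > 0" by linarith
      with w1 show False by (simp add: mult_less_0_iff)
    qed
    have UC: "U \<inter> C = {}"
    proof (rule ccontr)
      assume "U \<inter> C \<noteq> {}"
      then obtain u v where uU: "(u,v) \<in> U" and uC: "(u,v) \<in> C" by auto
      have va: "a < v" and vb: "v < b" using uU by (auto simp: U_def)
      have vpos: "v > 0" using va apos by linarith
      have "sin(-ln v) < 0" using va vb unfolding a_def b_def by (rule sin_neg_band)
      with vpos have neg: "v * sin(-ln v) < 0" by (simp add: mult_pos_neg)
      have "(u,v) \<in> X2" using uC by (simp add: C_def)
      then have "u < v * sin(-ln v)" using vpos unfolding X2_iff by (metis less_irrefl)
      with neg have "u < 0" by linarith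
      then have "(u,v) \<in> W" using va vb by (simp add: W_def)
      moreover have "(u,v) \<in> closure (f1 ` X1)" using uC by (simp add: C_def B_eq)
      moreover have "W \<inter> closure (f1 ` X1) = {}" using open_Int_closure_eq_empty[OF oW] WX by blast
      ultimately show False by blast
    qed
    have "U \<inter> D = {}" unfolding D_def using open_Int_closure_eq_empty[OF oU] UC by blast
    moreover have "q \<in> U" using qa qb by (simp add: U_def a_def b_def)
    ultimately show False using q by blast
  qed
  define vv :: "nat \<Rightarrow> real" where "vv = (\<lambda>i. exp(-(2*real (i+2) + 1/2)*pi))"
  have vvpos: "vv i > 0" for i by (simp add: vv_def)
  have vvle: "vv i \<le> exp(-2*pi)" for i
    unfolding vv_def by (rule exp_level_le) simp
  have sin_vv: "sin(-ln (vv i)) = 1" for i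
    unfolding vv_def by (rule sin_level_half)
  have K3: "(0, vv i) \<in> C" for i
  proof -
    define y where "y = exp(-(2*real (i+1) + 3/2)*pi)"
    have ypos: "y > 0" by (simp add: y_def)
    have yle: "y \<le> exp(-2*pi)" unfolding y_def by (rule exp_level_le) simp
    have sy: "sin(-ln y) = -1" unfolding y_def by (rule sin_level_3half)
    have yX1: "(0, y) \<in> X1" using ypos yle sy unfolding X1_iff XX_iff by simp
    have ey: "exp(-pi) * y = vv i"
      unfolding y_def vv_def by (subst exp_add[symmetric]) (simp add: algebra_simps)
    have fy: "(0, vv i) = f1 (0, y)" using ey by (simp add: f1_def)
    have "(0, vv i) \<in> f1 ` X1" unfolding fy by (rule imageI[OF yX1])
    then have "(0, vv i) \<in> B" unfolding B_eq by (rule subsetD[OF closure_subset])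
    moreover have "(0, vv i) \<in> X2" using vvpos[of i] vvle[of i] sin_vv[of i] exp_2pi_small
      unfolding X2_iff XX_iff by simp
    ultimately show ?thesis by (simp add: C_def)
  qed
  have hX2: "h m (0, vv i) \<in> X2" for m i
  proof (cases m)
    case 0 then show ?thesis using K3 by (simp add: h0 C_def)
  next
    case (Suc m')
    define u where "u = -1/2 + (1/2)/(2::real)^m"
    define v where "v = vv i / 2^m"
    have hv: "h m (0, vv i) = (u, v)" by (simp add: h_def u_def v_def)
    have pm: "(2::real)^m = 2 * 2^m'" by (simp add: Suc)
    have "(2::real)^m' \<ge> 1" by (rule one_le_power) simp
    then have p2: "(2::real)^m \<ge> 2" unfolding pm by linarith
    have q1: "(1/2)/(2::real)^m \<le> 1/4" using p2 by (subst pos_divide_le_eq) auto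
    have q2: "(1/2)/(2::real)^m > 0" by simp
    have u1: "u \<le> -1/4" "u \<ge> -1/2" unfolding u_def using q1 q2 by linarith+
    have vpos: "v > 0" using vvpos by (simp add: v_def)
    have "vv i \<le> vv i * 2^m" using vvpos[of i] p2 by (simp add: mult_le_cancel_left1)
    then have "v \<le> vv i" unfolding v_def by (subst pos_divide_le_eq) auto
    then have v1: "v \<le> exp(-2*pi)" using vvle[of i] by linarith
    have "v * (-1) \<le> v * sin(-ln v)"
      by (rule mult_left_mono[OF sin_ge_minus_one]) (use vpos in simp)
    then have "- v \<le> v * sin(-ln v)" by simp
    then have "u < v * sin(-ln v)" using u1 v1 exp_2pi_small by linarith
    then show ?thesis unfolding hv X2_iff XX_iff using u1 vpos v1 exp_2pi_small by simp
  qed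
  have K4: "A (Suc m) \<subseteq> h (Suc m) ` D" for m
  proof (induction m)
    case 0
    have "f2 ` (A 0 \<inter> X2) \<subseteq> h 1 ` D"
    proof
      fix z assume "z \<in> f2 ` (A 0 \<inter> X2)"
      then obtain c where c: "c \<in> C" "z = f2 c" by (auto simp: A_def C_def)
      have "c \<in> D" unfolding D_def by (rule subsetD[OF closure_subset c(1)])
      moreover have "z = h 1 c" using c by (simp add: hS h0)
      ultimately show "z \<in> h 1 ` D" by blast
    qed
    then show ?case unfolding A_Suc by (intro clos_img) simp
  next
    case (Suc m)
    have "f2 ` (A (Suc m) \<inter> X2) \<subseteq> h (Suc (Suc m)) ` D"
    proof
      fix z assume "z \<in> f2 ` (A (Suc m) \<inter> X2)"
      then obtain x where x: "x \<in> A (Suc m)" "z = f2 x" by auto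
      then obtain d where d: "d \<in> D" "x = h (Suc m) d" using Suc by blast
      have "z = h (Suc (Suc m)) d" using x d by (simp add: hS)
      then show "z \<in> h (Suc (Suc m)) ` D" using d by blast
    qed
    then show ?case unfolding A_Suc[of "Suc m"] by (rule clos_img)
  qed
  have K5: "h (Suc m) (0, vv i) \<in> A (Suc m)" for m i
  proof (induction m)
    case 0
    have "(0, vv i) \<in> A 0 \<inter> X2" using K3 by (simp add: A_def C_def)
    then have "f2 (0, vv i) \<in> f2 ` (A 0 \<inter> X2)" by blast
    then show ?case unfolding A_Suc hS h0 by (rule subsetD[OF closure_subset])
  next
    case (Suc m)
    then have "h (Suc m) (0, vv i) \<in> A (Suc m) \<inter> X2" using hX2 by blast
    then have "f2 (h (Suc m) (0, vv i)) \<in> f2 ` (A (Suc m) \<inter> X2)" by blast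
    then show ?case unfolding A_Suc[of "Suc m"] hS[of "Suc m"] by (rule subsetD[OF closure_subset])
  qed
  define m0 where "m0 = n - 2"
  define m where "m = Suc m0"
  have nm: "n = Suc m" using assms(4) by (simp add: m_def m0_def)
  define A' where "A' = A m"
  define P where "P = (\<lambda>i. h m (0, vv i))"
  have PA: "P i \<in> A'" for i unfolding P_def A'_def m_def by (rule K5)
  have A'D: "A' \<subseteq> h m ` D" unfolding A'_def m_def by (rule K4)
  define comp where "comp = (\<lambda>i. connected_component_set A' (P i))"
  have sep: "comp i \<noteq> comp l" if il: "i < l" for i l
  proof
    assume eq: "comp i = comp l"
    have "P l \<in> comp l" unfolding comp_def using PA by simp
    then have inl: "P l \<in> comp i" using eq by simp
    have ini: "P i \<in> comp i" unfolding comp_def using PA by simp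
    have cs: "connected (snd ` comp i)"
      by (rule connected_continuous_image[OF continuous_on_snd]) (auto simp: comp_def intro: continuous_on_id)
    define c where "c = exp(-(2*real i + 11/2)*pi)"
    have "vv l \<le> vv (Suc i)" unfolding vv_def using il by (intro exp_level_mono) simp
    moreover have "vv (Suc i) < c" unfolding vv_def c_def by (intro exp_level_strict) simp
    moreover have "c < vv i" unfolding vv_def c_def by (intro exp_level_strict) simp
    ultimately have "vv l / 2^m \<le> c / 2^m" "c / 2^m \<le> vv i / 2^m"
      by (simp_all add: divide_right_mono)
    then have "c / 2^m \<in> {snd (P l) .. snd (P i)}" by (simp add: P_def snd_h)
    moreover have "{snd (P l) .. snd (P i)} \<subseteq> snd ` comp i"
      using connected_contains_Icc[OF cs] inl ini by blast
    ultimately obtain z where z: "z \<in> comp i" "snd z = c / 2^m" by force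
    have "z \<in> A'" using z connected_component_subset unfolding comp_def by blast
    then obtain q where q: "q \<in> D" "z = h m q" using A'D by blast
    then have sq: "snd q = c" using z by (simp add: snd_h)
    have "exp(-(2*real (i+2)+2)*pi) < snd q" "snd q < exp(-(2*real (i+2)+1)*pi)"
      unfolding sq c_def by (intro exp_level_strict; simp)+
    then show False using gap q(1) by blast
  qed
  have injc: "inj comp" by (rule linorder_injI) (rule sep)
  have inf: "infinite (components A')"
  proof -
    have "range comp \<subseteq> components A'" unfolding comp_def using PA componentsI by blast
    moreover have "infinite (range comp)" by (rule range_inj_infinite[OF injc])
    ultimately show ?thesis using infinite_super by blast
  qed
  have nc: "\<not> connected A'"
  proof
    assume "connected A'"
    moreover have "A' \<noteq> {}" using PA by blast
    ultimately have "components A' = {A'}" by (simp add: components_eq_sing_iff)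
    with inf show False by simp
  qed
  have atom_eq: "atom f (1 # replicate m 2) = A'"
    by (simp add: atom_def fold_replicate_funpow A'_def A_def B_def)
  show ?thesis
    by (rule exI[where x="1 # replicate m 2"]) (use atom_eq nc inf nm in auto)
qed

end
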